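(* Fix an integer $k\ge2$ and, for each integer $n>k$, an arbitrary $\xi(k;n)\in(0,1)$ with $P_{n,k}(\xi(k;n))=Q_{n,k}(\xi(k;n))$. Let $\alpha=\limsup_{n\to\infty}\xi(k;n)^{n-1}$, and let $(n_p)_{p\in\mathbb N}$ be a strictly increasing sequence of integers $>k$ with $\alpha_p:=\xi(k;n_p)^{n_p-1}\to\alpha$ as $p\to\infty$. Then $\alpha=\lim_{p\to\infty}\alpha_p=0$.
   Context: For integers $k\ge2$, $n\ge1$ and $x\in\mathbb R$: $P_{n,k}(x)=\left(1+\frac{x^{n-1}}{2}\right)^{k+1}-\left(1-\frac{x^{n-1}}{2}\right)^{k+1}$, and for $n>k$: $Q_{n,k}(x)=(k+1)x^{n-k}$. (Solutions $\xi(k;n)\in(0,1)$ exist for every $n>k$.) *)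

theory Defs
  imports "HOL-Analysis.Analysis"
begin

definition P :: "nat \<Rightarrow> nat \<Rightarrow> real \<Rightarrow> real" where
  "P n k x = (1 + x ^ (n - 1) / 2) ^ (k + 1) - (1 - x ^ (n - 1) / 2) ^ (k + 1)"

definition Q :: "nat \<Rightarrow> nat \<Rightarrow> real \<Rightarrow> real" where
  "Q n k x = real (k + 1) * x ^ (n - k)"

end

theory Submission
  imports Defs "HOL-Real_Asymp.Real_Asymp"
begin

lemma gbound:
  fixes a :: real
  assumes a: "a \<ge> 0" and m: "m \<ge> 3"
  shows "2*real m*a + 2*real (m choose 3)*a^3 \<le> (1+a)^m - (1-a)^m"
proof -
  have e1: "(1+a)^m = (\<Sum>j\<le>m. real (m choose j) * a^j)"
    using binomial_ring[of a 1 m] by (simp add: add.commute)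
  have e2: "(1-a)^m = (\<Sum>j\<le>m. real (m choose j) * (-a)^j)"
    using binomial_ring[of "-a" 1 m] by (simp add: add.commute)
  have d: "(1+a)^m - (1-a)^m = (\<Sum>j\<le>m. real (m choose j) * (a^j - (-a)^j))"
    unfolding e1 e2 sum_subtractf[symmetric] by (simp add: algebra_simps)
  have nn: "\<And>j. 0 \<le> real (m choose j) * (a^j - (-a)^j)"
  proof -
    fix j :: nat
    have "(-a)^j \<le> a^j"
    proof (cases "even j")
      case True then show ?thesis by simp
    next
      case False then have "(-a)^j = - (a^j)" by simp
      then show ?thesis using a by simp
    qed
    then show "0 \<le> real (m choose j) * (a^j - (-a)^j)" by simp
  qed
  have sub: "{1,3} \<subseteq> {..m}" using m by auto
  have "(\<Sum>j\<in>{1,3}. real (m choose j) * (a^j - (-a)^j))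
        \<le> (\<Sum>j\<le>m. real (m choose j) * (a^j - (-a)^j))"
    by (rule sum_mono2[OF _ sub]) (use nn in auto)
  moreover have "(\<Sum>j\<in>{1,3}. real (m choose j) * (a^j - (-a)^j))
     = 2*real m*a + 2*real (m choose 3)*a^3" by simp
  ultimately show ?thesis using d by simp
qed

lemma keybound:
  fixes k n :: nat and x :: real
  assumes hk: "k \<ge> 2" and hn: "n > k" and x0: "0 < x" and x1: "x < 1"
    and eq: "P n k x = Q n k x"
  shows "(x^(n-1))^4 * (real n - 1) \<le> 4*(real k+1)*(real k - 1) / real (Suc k choose 3)"
proof -
  define y where "y = x^(n-1)"
  define t where "t = 1 - x"
  define C where "C = real (Suc k choose 3)"
  have Cpos: "C > 0" unfolding C_def using hk by simp
  have y0: "0 < y" "y \<le> 1" unfolding y_def using x0 x1 by (auto simp: power_le_one)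
  have t0: "0 < t" "t < 1" unfolding t_def using x0 x1 by auto
  have A: "(real k+1)*y + C*y^3/4 \<le> (real k+1)*x^(n-k)"
  proof -
    have "2*real (k+1)*(y/2) + 2*real (k+1 choose 3)*(y/2)^3 \<le> (1+y/2)^(k+1) - (1-y/2)^(k+1)"
      by (rule gbound) (use y0 hk in auto)
    also have "\<dots> = P n k x" unfolding P_def y_def by simp
    also have "\<dots> = (real k+1)*x^(n-k)" using eq unfolding Q_def by simp
    finally show ?thesis unfolding C_def by (simp add: power_divide algebra_simps)
  qed
  have B: "x^(n-k) - y \<le> (real k - 1)*t"
  proof -
    have split: "y = x^(n-k) * x^(k-1)" unfolding y_def
      using hn hk by (simp add: power_add[symmetric])
    have "1 + real (k-1) * (-t) \<le> (1 + -t)^(k-1)"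
      by (rule Bernoulli_inequality) (use t0 in auto)
    then have b: "1 - x^(k-1) \<le> (real k - 1)*t" using hk unfolding t_def
      by (simp add: of_nat_diff algebra_simps)
    have xp: "0 \<le> x^(n-k)" "x^(n-k) \<le> 1" using x0 x1 by (auto simp: power_le_one)
    have q: "0 \<le> 1 - x^(k-1)" using x0 x1 by (simp add: power_le_one)
    have "x^(n-k) - y = x^(n-k) * (1 - x^(k-1))" using split by (simp add: algebra_simps)
    also have "\<dots> \<le> 1 * (1 - x^(k-1))" by (rule mult_right_mono[OF xp(2) q])
    finally show ?thesis using b by simp
  qed
  have Cc: "C*y^3 \<le> 4*(real k+1)*(real k - 1)*t"
  proof -
    have "C*y^3 \<le> 4*(real k+1)*(x^(n-k) - y)" using A by (simp add: algebra_simps)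
    also have "\<dots> \<le> 4*(real k+1)*((real k - 1)*t)"
      by (rule mult_left_mono[OF B]) simp
    finally show ?thesis by simp
  qed
  have D: "y*(1 + (real n - 1)*t) \<le> 1"
  proof -
    have "1 + real (n-1) * t \<le> (1 + t)^(n-1)"
      by (rule Bernoulli_inequality) (use t0 in auto)
    then have b: "1 + (real n - 1) * t \<le> (1+t)^(n-1)" using hn by (simp add: of_nat_diff)
    have "y*(1 + (real n - 1)*t) \<le> y*(1+t)^(n-1)"
      by (rule mult_left_mono[OF b]) (use y0 in auto)
    also have "\<dots> = (1 - t^2)^(n-1)" unfolding y_def t_def
      by (simp add: power_mult_distrib[symmetric] power2_eq_square algebra_simps)
    also have "\<dots> \<le> 1" using t0 by (intro power_le_one) (auto simp: power_le_one)
    finally show ?thesis .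
  qed
  have E: "(real n - 1)*t*y \<le> 1" using D y0 by (simp add: algebra_simps)
  have n1: "real n - 1 \<ge> 0" using hn by simp
  have "C*(y^4*(real n - 1)) = (C*y^3) * ((real n - 1)*y)" by (simp add: power_numeral_reduce algebra_simps)
  also have "\<dots> \<le> (4*(real k+1)*(real k - 1)*t) * ((real n - 1)*y)"
    by (rule mult_right_mono[OF Cc]) (use n1 y0 in auto)
  also have "\<dots> = 4*(real k+1)*(real k - 1) * ((real n - 1)*t*y)" by (simp add: algebra_simps)
  also have "\<dots> \<le> 4*(real k+1)*(real k - 1) * 1"
    by (rule mult_left_mono[OF E]) (use hk in auto)
  finally have "C*(y^4*(real n - 1)) \<le> 4*(real k+1)*(real k - 1)" by simp
  then show ?thesis using Cpos unfolding y_def[symmetric] C_def[symmetric]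
    by (simp add: pos_le_divide_eq mult.commute)
qed

theorem lemma5p4:
  fixes k :: nat and \<xi> :: "nat \<Rightarrow> real" and np :: "nat \<Rightarrow> nat" and \<alpha> :: ereal
  assumes hk: "k \<ge> 2"
    and h\<xi>: "\<And>n. n > k \<Longrightarrow> 0 < \<xi> n \<and> \<xi> n < 1 \<and> P n k (\<xi> n) = Q n k (\<xi> n)"
    and h\<alpha>: "\<alpha> = limsup (\<lambda>n. ereal (\<xi> n ^ (n - 1)))"
    and hmono: "strict_mono np"
    and hnp: "\<And>p. np p > k"
    and hlim: "(\<lambda>p. ereal (\<xi> (np p) ^ (np p - 1))) \<longlonglongrightarrow> \<alpha>"
  shows "\<alpha> = 0 \<and> (\<lambda>p. \<xi> (np p) ^ (np p - 1)) \<longlonglongrightarrow> 0"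
proof -
  define K where "K = 4*(real k+1)*(real k - 1) / real (Suc k choose 3)"
  have lim4: "(\<lambda>n. root 4 (K / (real n - 1))) \<longlonglongrightarrow> 0"
  proof -
    have "(\<lambda>n. K / (real n - 1)) \<longlonglongrightarrow> 0" by real_asymp
    from tendsto_real_root[OF this, of 4] show ?thesis by simp
  qed
  have full: "(\<lambda>n. \<xi> n ^ (n - 1)) \<longlonglongrightarrow> 0"
  proof (rule tendsto_sandwich[OF _ _ tendsto_const lim4])
    show "\<forall>\<^sub>F n in sequentially. 0 \<le> \<xi> n ^ (n - 1)"
      using eventually_gt_at_top[of k] by eventually_elim (use h\<xi> in \<open>auto intro: less_imp_le\<close>)
    show "\<forall>\<^sub>F n in sequentially. \<xi> n ^ (n - 1) \<le> root 4 (K / (real n - 1))"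
      using eventually_gt_at_top[of k]
    proof eventually_elim
      case (elim n)
      have h: "0 < \<xi> n" "\<xi> n < 1" "P n k (\<xi> n) = Q n k (\<xi> n)" using h\<xi>[OF elim] by auto
      have kb: "(\<xi> n ^ (n-1))^4 * (real n - 1) \<le> K"
        unfolding K_def by (rule keybound[OF hk elim h])
      have n1: "real n - 1 > 0" using elim hk by simp
      have "(\<xi> n ^ (n-1))^4 \<le> K / (real n - 1)" using kb n1 by (simp add: pos_le_divide_eq)
      then have r1: "root 4 ((\<xi> n ^ (n-1))^4) \<le> root 4 (K / (real n - 1))"
        using real_root_le_iff[of 4] by simp
      have r2: "root 4 ((\<xi> n ^ (n-1))^4) = \<xi> n ^ (n-1)"
        using h by (intro real_root_power_cancel) auto
      show ?case using r1 unfolding r2 .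
    qed
  qed
  have sub: "(\<lambda>p. \<xi> (np p) ^ (np p - 1)) \<longlonglongrightarrow> 0"
    using LIMSEQ_subseq_LIMSEQ[OF full hmono] by (simp add: o_def)
  have "(\<lambda>p. ereal (\<xi> (np p) ^ (np p - 1))) \<longlonglongrightarrow> ereal 0"
    using sub by (simp add: lim_ereal)
  then have "\<alpha> = ereal 0" using hlim LIMSEQ_unique by blast
  then show ?thesis using sub by (simp add: zero_ereal_def)
qed

end
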